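(* Let $d$ be the discriminant of a real quadratic field, $p$ an odd prime not dividing $d$, and $p'$ an integer with $pp'\equiv1\pmod d$. For $1\le i\le p-1$ let $\beta_p(i)=\sum_{0<j<d\{p'i/d\}}(\frac dj)$. Then $$\sum_{i=1}^{p-1}\frac{\beta_p(i)}i\equiv-\frac1d\Big(\frac dp\Big)\sum_{c=1}^{d-1}\Big(\frac dc\Big)\Big(B_{p-1}\Big(\frac cd\Big)-B_{p-1}\Big)\pmod p.$$
   Context: $(\frac d{\cdot})$ is the Kronecker symbol; $\{x\}$ is the fractional part of $x$; $B_n(x)$ is the $n$th Bernoulli polynomial and $B_n=B_n(0)$. Congruences modulo $p$ are between rational numbers whose denominators are prime to $p$. *)

theory Defs
  imports "HOL-Number_Theory.Number_Theory" "HOL-Computational_Algebra.Squarefree"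
begin

(* Bernoulli numbers, convention B_1 = -1/2:  sum_{k<=n} C(n+1,k) B_k = 0 for n >= 1 *)
fun bernoulli :: "nat \<Rightarrow> rat" where
  "bernoulli n = (if n = 0 then 1
     else - (\<Sum>k<n. of_nat (Suc n choose k) * bernoulli k) / of_nat (Suc n))"

definition bernpoly :: "nat \<Rightarrow> rat \<Rightarrow> rat" where
  "bernpoly n x = (\<Sum>k\<le>n. of_nat (n choose k) * bernoulli k * x ^ (n - k))"

definition kron_prime :: "int \<Rightarrow> nat \<Rightarrow> int" where
  "kron_prime a q = (if q = 2 then (if even a then 0 else if a mod 8 = 1 \<or> a mod 8 = 7 then 1 else -1)
                     else Legendre a (int q))"

definition kronecker :: "int \<Rightarrow> int \<Rightarrow> int" where
  "kronecker a n = (if n = 0 then (if \<bar>a\<bar> = 1 then 1 else 0)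
     else (if n < 0 \<and> a < 0 then -1 else 1) *
       (\<Prod>q\<in>prime_factors (nat \<bar>n\<bar>). kron_prime a q ^ multiplicity q (nat \<bar>n\<bar>)))"

definition fundamental_discriminant :: "int \<Rightarrow> bool" where
  "fundamental_discriminant d \<longleftrightarrow> d \<noteq> 1 \<and>
     ((d mod 4 = 1 \<and> squarefree d) \<or>
      (\<exists>m. d = 4 * m \<and> (m mod 4 = 2 \<or> m mod 4 = 3) \<and> squarefree m))"

definition real_quadratic_disc :: "int \<Rightarrow> bool" where
  "real_quadratic_disc d \<longleftrightarrow> fundamental_discriminant d \<and> d > 0"

definition rat_cong :: "rat \<Rightarrow> rat \<Rightarrow> int \<Rightarrow> bool" where
  "rat_cong x y p \<longleftrightarrow> coprime (snd (quotient_of x)) p \<and> coprime (snd (quotient_of y)) p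
      \<and> p dvd fst (quotient_of (x - y))"

end

theory Submission
  imports Defs
begin


definition pint :: "int \<Rightarrow> rat \<Rightarrow> bool" where
 "pint p x \<longleftrightarrow> (\<exists>a b. b \<noteq> 0 \<and> \<not> p dvd b \<and> x = of_int a / of_int b)"

definition pcong :: "int \<Rightarrow> rat \<Rightarrow> rat \<Rightarrow> bool" where
 "pcong p x y \<longleftrightarrow> pint p x \<and> pint p y \<and> (\<exists>z. pint p z \<and> x - y = of_int p * z)"

context fixes p :: int assumes pp: "prime p"
begin

lemma pint_frac: "\<not> p dvd b \<Longrightarrow> pint p (of_int a / of_int b)"
  unfolding pint_def using pp by (metis dvd_0_right)

lemma pint_int: "pint p (of_int a)"
  using pint_frac[of 1 a] pp by (simp add: prime_int_iff)

lemma pint_0: "pint p 0" using pint_int[of 0] by simp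
lemma pint_1: "pint p 1" using pint_int[of 1] by simp

lemma pint_add: assumes "pint p x" "pint p y" shows "pint p (x + y)"
proof -
  obtain a b where ab: "b \<noteq> 0" "\<not> p dvd b" "x = of_int a / of_int b" using assms(1) pint_def by auto
  obtain c e where ce: "e \<noteq> 0" "\<not> p dvd e" "y = of_int c / of_int e" using assms(2) pint_def by auto
  have eq: "x + y = of_int (a*e + c*b) / of_int (b*e)" using ab ce by (simp add: field_simps)
  have "\<not> p dvd b*e" using ab ce pp by (simp add: prime_dvd_mult_iff)
  then show ?thesis unfolding eq by (rule pint_frac)
qed

lemma pint_mult: assumes "pint p x" "pint p y" shows "pint p (x * y)"
proof -
  obtain a b where ab: "b \<noteq> 0" "\<not> p dvd b" "x = of_int a / of_int b" using assms(1) pint_def by auto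
  obtain c e where ce: "e \<noteq> 0" "\<not> p dvd e" "y = of_int c / of_int e" using assms(2) pint_def by auto
  have eq: "x * y = of_int (a*c) / of_int (b*e)" using ab ce by (simp add: field_simps)
  have "\<not> p dvd b*e" using ab ce pp by (simp add: prime_dvd_mult_iff)
  then show ?thesis unfolding eq by (rule pint_frac)
qed

lemma pint_uminus: assumes "pint p x" shows "pint p (- x)"
  using pint_mult[OF pint_int[of "-1"] assms] by simp

lemma pint_diff: assumes "pint p x" "pint p y" shows "pint p (x - y)"
  using pint_add[OF assms(1) pint_uminus[OF assms(2)]] by simp

lemma pint_sum: "(\<And>i. i \<in> A \<Longrightarrow> pint p (f i)) \<Longrightarrow> pint p (\<Sum>i\<in>A. f i)"
  by (induction A rule: infinite_finite_induct) (auto intro: pint_add pint_0)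

lemma pint_power: "pint p x \<Longrightarrow> pint p (x ^ n)"
  by (induction n) (auto intro: pint_mult pint_1)

lemma pint_quot: "pint p x \<longleftrightarrow> coprime (snd (quotient_of x)) p"
proof
  obtain a0 b0 where q: "quotient_of x = (a0, b0)" by force
  have x0: "x = of_int a0 / of_int b0" using q quotient_of_div by blast
  have b0: "b0 > 0" using q quotient_of_denom_pos by blast
  have cop: "coprime a0 b0" using q quotient_of_coprime by blast
  {
    assume "pint p x"
    then obtain a b where ab: "b \<noteq> 0" "\<not> p dvd b" "x = of_int a / of_int b" using pint_def by auto
    have "of_int a0 / of_int b0 = (of_int a / of_int b :: rat)" using x0 ab by simp
    then have "of_int (a0 * b) = (of_int (a * b0) :: rat)" using ab(1) b0 by (simp add: field_simps)
    then have e: "a0 * b = a * b0" by (simp only: of_int_eq_iff)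
    have "\<not> p dvd b0"
    proof
      assume "p dvd b0"
      then have "p dvd a0 * b" using e by simp
      then have "p dvd a0" using ab(2) pp by (simp add: prime_dvd_mult_iff)
      then show False using \<open>p dvd b0\<close> cop pp
        by (meson coprime_common_divisor not_prime_unit)
    qed
    then have "coprime b0 p" using prime_imp_coprime[OF pp] coprime_commute by blast
    then show "coprime (snd (quotient_of x)) p" using q by simp
  }
  {
    assume "coprime (snd (quotient_of x)) p"
    then have "\<not> p dvd b0" using q pp
      by (metis coprime_absorb_right not_prime_unit snd_conv)
    then show "pint p x" using x0 pint_frac by simp
  }
qed

lemma pcong_rat_cong: assumes "pcong p x y" shows "rat_cong x y p"
proof -
  obtain z where z: "pint p z" "x - y = of_int p * z" using assms pcong_def by auto
  obtain a b where ab: "b \<noteq> 0" "\<not> p dvd b" "z = of_int a / of_int b" using z(1) pint_def by auto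
  obtain a0 b0 where q: "quotient_of (x - y) = (a0, b0)" by force
  have x0: "x - y = of_int a0 / of_int b0" using q quotient_of_div by blast
  have b0: "b0 > 0" using q quotient_of_denom_pos by blast
  have "of_int a0 / of_int b0 = (of_int (p * a) / of_int b :: rat)" using x0 z ab by simp
  then have "of_int (a0 * b) = (of_int (p * a * b0) :: rat)" using ab(1) b0 by (simp add: field_simps)
  then have e: "a0 * b = p * a * b0" by (simp only: of_int_eq_iff)
  then have "p dvd a0 * b" by (metis dvd_triv_left mult.assoc)
  then have "p dvd a0" using ab(2) pp by (simp add: prime_dvd_mult_iff)
  then show ?thesis using assms q unfolding rat_cong_def pcong_def by (simp add: pint_quot)
qed

lemma pcong_eq: "pint p x \<Longrightarrow> x = y \<Longrightarrow> pcong p x y"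
  unfolding pcong_def using pint_0 by auto

lemma pcong_sym: "pcong p x y \<Longrightarrow> pcong p y x"
  unfolding pcong_def by (metis minus_diff_eq mult_minus_right pint_uminus)

lemma pcong_trans: "pcong p x y \<Longrightarrow> pcong p y w \<Longrightarrow> pcong p x w"
  unfolding pcong_def
proof (elim conjE exE, intro conjI)
  fix z1 z2 assume "pint p z1" "x - y = of_int p * z1" "pint p z2" "y - w = of_int p * z2"
  then show "\<exists>z. pint p z \<and> x - w = of_int p * z"
    by (intro exI[of _ "z1 + z2"]) (auto intro: pint_add simp: algebra_simps)
qed

lemma pcong_add: "pcong p x y \<Longrightarrow> pcong p u v \<Longrightarrow> pcong p (x + u) (y + v)"
  unfolding pcong_def
proof (elim conjE exE, intro conjI)
  fix z1 z2 assume "pint p z1" "x - y = of_int p * z1" "pint p z2" "u - v = of_int p * z2"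
  then show "\<exists>z. pint p z \<and> x + u - (y + v) = of_int p * z"
    by (intro exI[of _ "z1 + z2"]) (auto intro: pint_add simp: algebra_simps)
qed (auto intro: pint_add)

lemma pcong_uminus: "pcong p x y \<Longrightarrow> pcong p (- x) (- y)"
  unfolding pcong_def by (metis minus_diff_eq minus_diff_minus mult_minus_right pint_uminus)

lemma pcong_diff: "pcong p x y \<Longrightarrow> pcong p u v \<Longrightarrow> pcong p (x - u) (y - v)"
  using pcong_add[OF _ pcong_uminus] by (metis diff_conv_add_uminus)

lemma pcong_mult: "pcong p x y \<Longrightarrow> pcong p u v \<Longrightarrow> pcong p (x * u) (y * v)"
  unfolding pcong_def
proof (elim conjE exE, intro conjI)
  fix z1 z2 assume "pint p z1" "x - y = of_int p * z1" "pint p z2" "u - v = of_int p * z2"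
    "pint p x" "pint p v"
  moreover have "x * u - y * v = x * (u - v) + (x - y) * v" by (simp add: algebra_simps)
  ultimately have "x * u - y * v = of_int p * (x * z2 + z1 * v)" by (simp add: algebra_simps)
  moreover have "pint p (x * z2 + z1 * v)" using \<open>pint p x\<close> \<open>pint p v\<close> \<open>pint p z1\<close> \<open>pint p z2\<close> by (intro pint_add pint_mult)
  ultimately show "\<exists>z. pint p z \<and> x * u - y * v = of_int p * z" by blast
qed (auto intro: pint_mult)

lemma pcong_sum: "(\<And>i. i \<in> A \<Longrightarrow> pcong p (f i) (g i)) \<Longrightarrow> pcong p (\<Sum>i\<in>A. f i) (\<Sum>i\<in>A. g i)"
  by (induction A rule: infinite_finite_induct) (auto intro: pcong_add pcong_eq pint_0)

lemma pcong_power: "pcong p x y \<Longrightarrow> pcong p (x ^ n) (y ^ n)"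
  by (induction n) (auto intro: pcong_mult pcong_eq pint_1)

lemma pcong_multp: "pint p z \<Longrightarrow> pcong p (x + of_int p * z) x \<longleftrightarrow> pint p x"
  unfolding pcong_def by (auto intro: pint_add pint_mult pint_int)

end


declare bernoulli.simps [simp del]

lemma bern_rec: assumes "N \<ge> 2" shows "(\<Sum>k<N. of_nat (N choose k) * bernoulli k) = 0"
proof -
  obtain n where N: "N = Suc n" and n: "n \<ge> 1" using assms by (cases N) auto
  have "bernoulli n = - (\<Sum>k<n. of_nat (Suc n choose k) * bernoulli k) / of_nat (Suc n)"
    using n bernoulli.simps[of n] by simp
  then have "of_nat (Suc n) * bernoulli n = - (\<Sum>k<n. of_nat (Suc n choose k) * bernoulli k)"
    by (simp del: of_nat_Suc)
  moreover have "(Suc n choose n) = Suc n" by simp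
  ultimately show ?thesis unfolding N by (simp del: of_nat_Suc)
qed

lemma bern_rec1: assumes "N \<ge> 1" shows "(\<Sum>k<N. of_nat (N choose k) * bernoulli k) = (if N = 1 then 1 else 0)"
proof (cases "N = 1")
  case True then show ?thesis by (simp add: bernoulli.simps)
next
  case False then show ?thesis using bern_rec[of N] assms by simp
qed

definition bG :: "nat \<Rightarrow> rat \<Rightarrow> rat" where
  "bG n x = (\<Sum>k<n. of_nat (n choose k) * bernoulli k * x ^ (n - k))"

lemma bernpoly_bG: "bernpoly n x - bernoulli n = bG n x"
  unfolding bernpoly_def bG_def by (simp add: lessThan_Suc_atMost[symmetric])

lemma pow_diff_binom: "(x + 1) ^ N - x ^ N = (\<Sum>j<N. of_nat (N choose j) * (x::rat) ^ j)"
  using binomial_ring[of x 1 N] by (simp add: lessThan_Suc_atMost[symmetric])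

lemma sum_triangle_swap: fixes n :: nat shows
  "(\<Sum>k<n. \<Sum>j<n-k. f k j) = (\<Sum>j<n. \<Sum>k<n-j. (f k j :: rat))"
proof -
  have a: "(\<Sum>j<n-k. g j) = (\<Sum>j<n. if k + j < n then g j else 0)" for k :: nat and g :: "nat \<Rightarrow> rat"
  proof -
    have "(\<Sum>j<n. if k + j < n then g j else 0) = (\<Sum>j\<in>{..<n} \<inter> {j. k + j < n}. g j)"
      by (simp add: sum.inter_restrict)
    also have "{..<n} \<inter> {j. k + j < n} = {..<n-k}" by auto
    finally show ?thesis by simp
  qed
  have b: "(\<Sum>k<n-j. g k) = (\<Sum>k<n. if k + j < n then g k else 0)" for j :: nat and g :: "nat \<Rightarrow> rat"
  proof -
    have "(\<Sum>k<n. if k + j < n then g k else 0) = (\<Sum>k\<in>{..<n} \<inter> {k. k + j < n}. g k)"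
      by (simp add: sum.inter_restrict)
    also have "{..<n} \<inter> {k. k + j < n} = {..<n-j}" by auto
    finally show ?thesis by simp
  qed
  have "(\<Sum>k<n. \<Sum>j<n-k. f k j) = (\<Sum>k<n. \<Sum>j<n. if k + j < n then f k j else 0)"
    by (simp add: a)
  also have "\<dots> = (\<Sum>j<n. \<Sum>k<n. if k + j < n then f k j else 0)" by (rule sum.swap)
  also have "\<dots> = (\<Sum>j<n. \<Sum>k<n-j. f k j)" by (simp add: b)
  finally show ?thesis .
qed

lemma choose_swap: assumes "k + j \<le> n"
  shows "(n choose k) * ((n - k) choose j) = (n choose j) * ((n - j) choose k)"
proof -
  have "(n choose (k+j)) * ((k+j) choose k) = (n choose k) * ((n - k) choose j)"
    using choose_mult[of k "k+j" n] assms by simp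
  moreover have "(n choose (k+j)) * ((k+j) choose j) = (n choose j) * ((n - j) choose k)"
    using choose_mult[of j "k+j" n] assms by simp
  moreover have "((k+j) choose k) = ((k+j) choose j)"
    using binomial_symmetric[of k "k+j"] by simp
  ultimately show ?thesis by simp
qed

lemma bG_diff: assumes "n \<ge> 1" shows "bG n (x + 1) - bG n x = of_nat n * x ^ (n - 1)"
proof -
  have "bG n (x + 1) - bG n x = (\<Sum>k<n. of_nat (n choose k) * bernoulli k * ((x+1) ^ (n - k) - x ^ (n - k)))"
    unfolding bG_def by (simp add: sum_subtractf[symmetric] algebra_simps)
  also have "\<dots> = (\<Sum>k<n. \<Sum>j<n-k. of_nat (n choose k) * bernoulli k * (of_nat ((n-k) choose j) * x ^ j))"
    by (simp add: pow_diff_binom sum_distrib_left)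
  also have "\<dots> = (\<Sum>j<n. \<Sum>k<n-j. of_nat (n choose k) * bernoulli k * (of_nat ((n-k) choose j) * x ^ j))"
    by (rule sum_triangle_swap)
  also have "\<dots> = (\<Sum>j<n. of_nat (n choose j) * x ^ j * (\<Sum>k<n-j. of_nat ((n-j) choose k) * bernoulli k))"
  proof (rule sum.cong[OF refl])
    fix j assume j: "j \<in> {..<n}"
    show "(\<Sum>k<n-j. of_nat (n choose k) * bernoulli k * (of_nat ((n-k) choose j) * x ^ j)) =
          of_nat (n choose j) * x ^ j * (\<Sum>k<n-j. of_nat ((n-j) choose k) * bernoulli k)"
      unfolding sum_distrib_left
    proof (rule sum.cong[OF refl])
      fix k assume "k \<in> {..<n-j}"
      then have "(n choose k) * ((n - k) choose j) = (n choose j) * ((n - j) choose k)"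
        by (intro choose_swap) auto
      then have "(of_nat (n choose k) * of_nat ((n - k) choose j) :: rat) = of_nat (n choose j) * of_nat ((n - j) choose k)"
        by (metis of_nat_mult)
      then show "of_nat (n choose k) * bernoulli k * (of_nat ((n-k) choose j) * x ^ j) =
          of_nat (n choose j) * x ^ j * (of_nat ((n-j) choose k) * bernoulli k)"
        by (metis (no_types, lifting) mult.assoc mult.commute)
    qed
  qed
  also have "\<dots> = (\<Sum>j<n. of_nat (n choose j) * x ^ j * (if j = n - 1 then 1 else 0))"
  proof (rule sum.cong[OF refl])
    fix j assume "j \<in> {..<n}"
    then have "n - j \<ge> 1" "(n - j = 1) = (j = n - 1)" by auto
    then show "of_nat (n choose j) * x ^ j * (\<Sum>k<n-j. of_nat ((n-j) choose k) * bernoulli k) =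
          of_nat (n choose j) * x ^ j * (if j = n - 1 then 1 else 0)"
      using bern_rec1[of "n-j"] by simp
  qed
  also have "\<dots> = of_nat (n choose (n - 1)) * x ^ (n - 1)"
    using assms by (simp add: sum.delta' if_distrib cong: if_cong)
  also have "(n choose (n - 1)) = n" using assms by (cases n) auto
  finally show ?thesis by simp
qed

context fixes p :: int assumes pp: "prime p"
begin

lemma pint_bernoulli: "int k + 1 < p \<Longrightarrow> pint p (bernoulli k)"
proof (induction k rule: less_induct)
  case (less k)
  show ?case
  proof (cases "k = 0")
    case True then show ?thesis using pint_1[OF pp] by (simp add: bernoulli.simps)
  next
    case False
    have eq: "bernoulli k = - (\<Sum>j<k. of_nat (Suc k choose j) * bernoulli j) * (of_int 1 / of_int (int k + 1))"
      using False bernoulli.simps[of k] by (simp add: divide_inverse)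
    have "pint p (\<Sum>j<k. of_nat (Suc k choose j) * bernoulli j)"
    proof (rule pint_sum[OF pp])
      fix j assume "j \<in> {..<k}"
      have "pint p (of_nat (Suc k choose j))" using pint_int[OF pp, of "int (Suc k choose j)"] by simp
      moreover have "pint p (bernoulli j)" using less \<open>j \<in> {..<k}\<close> by auto
      ultimately show "pint p (of_nat (Suc k choose j) * bernoulli j)" by (rule pint_mult[OF pp])
    qed
    moreover have "\<not> p dvd (int k + 1)"
      using less.prems zdvd_imp_le by fastforce
    ultimately show ?thesis unfolding eq
      by (intro pint_mult[OF pp] pint_uminus[OF pp] pint_frac[OF pp])
  qed
qed

lemma pint_bG: assumes "int n < p" "pint p x" shows "pint p (bG n x)"
  unfolding bG_def
proof (rule pint_sum[OF pp])
  fix k assume "k \<in> {..<n}"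
  then have "pint p (bernoulli k)" using assms by (intro pint_bernoulli) auto
  then show "pint p (of_nat (n choose k) * bernoulli k * x ^ (n - k))"
    using pint_int[OF pp, of "int (n choose k)"] assms(2)
    by (intro pint_mult[OF pp] pint_power[OF pp]) auto
qed

lemma pcong_bG: assumes "int n < p" "pint p x" "pint p y"
  shows "pcong p (bG n (x + of_int p * y)) (bG n x)"
  unfolding bG_def
proof (rule pcong_sum[OF pp])
  fix k assume "k \<in> {..<n}"
  then have b: "pint p (bernoulli k)" using assms by (intro pint_bernoulli) auto
  have c: "pint p (of_nat (n choose k))" using pint_int[OF pp, of "int (n choose k)"] by simp
  have "pcong p (x + of_int p * y) x" using pcong_multp[OF pp assms(3)] assms(2) by simp
  then have "pcong p ((x + of_int p * y) ^ (n - k)) (x ^ (n - k))" by (rule pcong_power[OF pp])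
  then show "pcong p (of_nat (n choose k) * bernoulli k * (x + of_int p * y) ^ (n - k))
                     (of_nat (n choose k) * bernoulli k * x ^ (n - k))"
    using pcong_mult[OF pp pcong_eq[OF pp pint_mult[OF pp c b] refl]] by blast
qed

end


definition c4 :: "int \<Rightarrow> int" where
  "c4 n = (if even n then 0 else if n mod 4 = 1 then 1 else -1)"
definition c8 :: "int \<Rightarrow> int" where
  "c8 n = (if even n then 0 else if n mod 8 = 1 \<or> n mod 8 = 7 then 1 else -1)"
definition t8 :: "int \<Rightarrow> int" where
  "t8 r = (if r = 1 \<or> r = 7 then 1 else if r = 3 \<or> r = 5 then -1 else 0)"
definition t4 :: "int \<Rightarrow> int" where
  "t4 r = (if r = 1 then 1 else if r = 3 then -1 else 0)"
lemma c8_t8: "c8 n = t8 (n mod 8)"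
proof -
  have "n mod 8 = 0 \<or> n mod 8 = 1 \<or> n mod 8 = 2 \<or> n mod 8 = 3 \<or> n mod 8 = 4 \<or> n mod 8 = 5 \<or> n mod 8 = 6 \<or> n mod 8 = 7" by presburger
  moreover have "even n \<longleftrightarrow> even (n mod 8)" by presburger
  ultimately show ?thesis unfolding c8_def t8_def by (elim disjE) simp_all
qed
lemma c4_t4: "c4 n = t4 (n mod 4)"
proof -
  have "n mod 4 = 0 \<or> n mod 4 = 1 \<or> n mod 4 = 2 \<or> n mod 4 = 3" by presburger
  moreover have "even n \<longleftrightarrow> even (n mod 4)" by presburger
  ultimately show ?thesis unfolding c4_def t4_def by (elim disjE) simp_all
qed
lemma t8_mult: "r \<in> {0..7} \<Longrightarrow> s \<in> {0..7} \<Longrightarrow> t8 ((r * s) mod 8) = t8 r * t8 s"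
proof -
  assume "r \<in> {0..7}" "s \<in> {0..7}"
  then have "r = 0 \<or> r = 1 \<or> r = 2 \<or> r = 3 \<or> r = 4 \<or> r = 5 \<or> r = 6 \<or> r = 7"
    "s = 0 \<or> s = 1 \<or> s = 2 \<or> s = 3 \<or> s = 4 \<or> s = 5 \<or> s = 6 \<or> s = 7" by auto
  then show ?thesis unfolding t8_def by (elim disjE) simp_all
qed
lemma t4_mult: "r \<in> {0..3} \<Longrightarrow> s \<in> {0..3} \<Longrightarrow> t4 ((r * s) mod 4) = t4 r * t4 s"
proof -
  assume "r \<in> {0..3}" "s \<in> {0..3}"
  then have "r = 0 \<or> r = 1 \<or> r = 2 \<or> r = 3"
    "s = 0 \<or> s = 1 \<or> s = 2 \<or> s = 3" by auto
  then show ?thesis unfolding t4_def by (elim disjE) simp_all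
qed
lemma c8_mult: "c8 (a * b) = c8 a * c8 b"
  unfolding c8_t8 using t8_mult[of "a mod 8" "b mod 8"] by (simp add: mod_mult_eq)
lemma c4_mult: "c4 (a * b) = c4 a * c4 b"
  unfolding c4_t4 using t4_mult[of "a mod 4" "b mod 4"] by (simp add: mod_mult_eq)
lemma c4_mod: "c4 n = c4 (n mod 4)" unfolding c4_t4 by simp
lemma c8_mod: "c8 n = c8 (n mod 8)" unfolding c8_t8 by simp

lemma c4_1 [simp]: "c4 1 = 1" by (simp add: c4_def)
lemma c8_1 [simp]: "c8 1 = 1" by (simp add: c8_def)


lemma c8_parity: "odd (q::int) \<Longrightarrow> q > 2 \<Longrightarrow> even ((q - 1) div 2 - (q - 1) div 2 div 2) \<longleftrightarrow> q mod 8 = 1 \<or> q mod 8 = 7"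
proof -
  assume "odd q" "q > 2"
  define k where "k = q div 8"
  define r where "r = q mod 8"
  have "q = 8 * k + r" unfolding k_def r_def by simp
  moreover have "r = 1 \<or> r = 3 \<or> r = 5 \<or> r = 7" using \<open>odd q\<close> unfolding r_def by presburger
  ultimately show ?thesis unfolding r_def[symmetric] by (elim disjE; simp; presburger)
qed

context fixes q :: nat assumes qp: "prime q" and q2: "q > 2"
begin

lemma leg_cong: "[a = b] (mod int q) \<Longrightarrow> Legendre a (int q) = Legendre b (int q)"
proof -
  assume c: "[a = b] (mod int q)"
  have 1: "[a = 0] (mod int q) \<longleftrightarrow> [b = 0] (mod int q)" using c cong_sym cong_trans by blast
  have 2: "QuadRes (int q) a \<longleftrightarrow> QuadRes (int q) b" unfolding QuadRes_def using c cong_sym cong_trans by blast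
  show ?thesis unfolding Legendre_def using 1 2 by simp
qed

lemma leg_mod: "Legendre (a mod int q) (int q) = Legendre a (int q)"
  by (rule leg_cong) (simp add: cong_def)

lemma leg_zero_iff: "Legendre a (int q) = 0 \<longleftrightarrow> int q dvd a"
  unfolding Legendre_def by (simp add: cong_0_iff)

lemma leg_vals: "Legendre a (int q) = 0 \<or> Legendre a (int q) = 1 \<or> Legendre a (int q) = -1"
  unfolding Legendre_def by auto

lemma leg_1: "Legendre 1 (int q) = 1"
proof -
  have "\<not> [1 = 0] (mod int q)" using q2 by (simp add: cong_0_iff)
  moreover have "QuadRes (int q) 1" unfolding QuadRes_def by (rule exI[of _ 1]) simp
  ultimately show ?thesis unfolding Legendre_def by simp
qed

lemma small_dvd_zero: "int q dvd x \<Longrightarrow> \<bar>x\<bar> \<le> 2 \<Longrightarrow> x = 0"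
proof (rule ccontr)
  assume "int q dvd x" "\<bar>x\<bar> \<le> 2" "x \<noteq> 0"
  then have "\<bar>int q\<bar> \<le> \<bar>x\<bar>" using dvd_imp_le_int by blast
  then show False using q2 \<open>\<bar>x\<bar> \<le> 2\<close> by simp
qed

lemma leg_mult: "Legendre (a * b) (int q) = Legendre a (int q) * Legendre b (int q)"
proof -
  let ?h = "(q - 1) div 2"
  have e1: "[Legendre (a*b) (int q) = (a*b) ^ ?h] (mod int q)" using euler_criterion qp q2 by blast
  have e2: "[Legendre a (int q) = a ^ ?h] (mod int q)" using euler_criterion qp q2 by blast
  have e3: "[Legendre b (int q) = b ^ ?h] (mod int q)" using euler_criterion qp q2 by blast
  have "[Legendre (a*b) (int q) = Legendre a (int q) * Legendre b (int q)] (mod int q)"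
    using e1 cong_mult[OF e2 e3] by (metis cong_sym cong_trans power_mult_distrib)
  then have "int q dvd Legendre (a*b) (int q) - Legendre a (int q) * Legendre b (int q)"
    by (simp add: cong_iff_dvd_diff)
  moreover have "\<bar>Legendre (a*b) (int q) - Legendre a (int q) * Legendre b (int q)\<bar> \<le> 2"
    using leg_vals[of "a*b"] leg_vals[of a] leg_vals[of b] by auto
  ultimately have "Legendre (a*b) (int q) - Legendre a (int q) * Legendre b (int q) = 0"
    by (rule small_dvd_zero)
  then show ?thesis by simp
qed

lemma leg_2: "Legendre 2 (int q) = c8 (int q)"
proof -
  interpret G: GAUSS q 2
    using qp q2 by unfold_locales (auto simp: cong_0_iff zdvd_not_zless)
  let ?h = "(int q - 1) div 2"
  have "G.E = (\<lambda>x. x * 2) ` {?h div 2 <.. ?h}"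
  proof -
    have m: "x * 2 mod int q = x * 2" if "x \<in> G.A" for x
      using that q2 unfolding G.A_def by (auto intro!: mod_pos_pos_trivial)
    show ?thesis unfolding G.E_def G.C_def G.B_def
      using m unfolding G.A_def by (auto simp: image_iff) 
  qed
  then have "card G.E = card {?h div 2 <.. ?h}"
    by (simp add: card_image inj_on_def)
  also have "\<dots> = nat (?h - ?h div 2)" by simp
  finally have cE: "card G.E = nat (?h - ?h div 2)" .
  have oq: "odd (int q)" using qp q2 prime_odd_nat by auto
  have "even (nat (?h - ?h div 2)) \<longleftrightarrow> int q mod 8 = 1 \<or> int q mod 8 = 7"
  proof -
    have "?h - ?h div 2 \<ge> 0" by simp
    then have "even (nat (?h - ?h div 2)) \<longleftrightarrow> even (?h - ?h div 2)" by (simp add: even_nat_iff)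
    also have "\<dots> \<longleftrightarrow> int q mod 8 = 1 \<or> int q mod 8 = 7" using c8_parity[OF oq] q2 by simp
    finally show ?thesis .
  qed
  then show ?thesis using G.gauss_lemma cE oq unfolding c8_def by auto
qed

lemma leg_nonres: "\<exists>a. Legendre a (int q) = -1"
proof (rule ccontr)
  assume nr: "\<not> ?thesis"
  let ?h = "(q - 1) div 2"
  have qh: "int q = 2 * int ?h + 1" using prime_odd_nat[OF qp] q2 by presburger
  have "{1..<q} \<subseteq> (\<lambda>x. x^2 mod q) ` {1..?h}"
  proof
    fix a assume a: "a \<in> {1..<q}"
    have "\<not> int q dvd int a" using a by (auto simp: zdvd_not_zless)
    then have "Legendre (int a) (int q) \<noteq> 0" by (simp add: leg_zero_iff)
    then have "QuadRes (int q) (int a)" using nr unfolding Legendre_def by (auto split: if_splits)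
    then obtain y where y: "[y^2 = int a] (mod int q)" unfolding QuadRes_def by auto
    define z where "z = y mod int q"
    have z: "0 \<le> z" "z < int q" using q2 unfolding z_def by auto
    have yz: "[z^2 = int a] (mod int q)" using y unfolding z_def by (metis cong_def power_mod)
    have "z \<noteq> 0" using yz a q2 by (auto simp: cong_def)
    define w where "w = (if z \<le> int ?h then z else int q - z)"
    have w: "1 \<le> w" "w \<le> int ?h" using z \<open>z \<noteq> 0\<close> qh unfolding w_def by auto
    have "[w^2 = z^2] (mod int q)"
    proof (cases "z \<le> int ?h")
      case False
      have "(int q - z)^2 = z^2 + int q * (int q - 2 * z)" by (simp add: power2_eq_square algebra_simps)
      then show ?thesis using False unfolding w_def by (simp add: cong_def)
    qed (simp add: w_def)
    then have "[w^2 = int a] (mod int q)" using yz cong_trans by blast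
    then have "w^2 mod int q = int a" using a by (simp add: cong_def)
    moreover have "int (nat w ^ 2 mod q) = w^2 mod int q" using w by (simp add: of_nat_mod)
    ultimately have "nat w ^ 2 mod q = a" by simp
    moreover have "nat w \<in> {1..?h}" using w by auto
    ultimately show "a \<in> (\<lambda>x. x^2 mod q) ` {1..?h}" by force
  qed
  then have "card {1..<q} \<le> card ((\<lambda>x. x^2 mod q) ` {1..?h})" by (intro card_mono) auto
  also have "\<dots> \<le> card {1..?h}" by (rule card_image_le) simp
  finally show False using q2 by simp
qed

end

lemma leg_recip:
  assumes "prime q" "q > 2" "prime r" "r > 2" "q \<noteq> r"
  shows "Legendre (int r) (int q) = Legendre (int q) (int r) * (if q mod 4 = 3 \<and> r mod 4 = 3 then -1 else 1)"
proof -
  have QR: "Legendre (int q) (int r) * Legendre (int r) (int q) = (-1::int) ^ ((q - 1) div 2 * ((r - 1) div 2))"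
    using Quadratic_Reciprocity assms by blast
  have nq: "Legendre (int r) (int q) \<noteq> 0" using leg_zero_iff[OF assms(1,2)] assms
    by (metis of_nat_dvd_iff primes_dvd_imp_eq)
  have nr: "Legendre (int q) (int r) \<noteq> 0" using leg_zero_iff[OF assms(3,4)] assms
    by (metis of_nat_dvd_iff primes_dvd_imp_eq)
  have oq: "odd q" "odd r" using assms prime_odd_nat by auto
  have "(-1::int) ^ ((q - 1) div 2 * ((r - 1) div 2)) = (if q mod 4 = 3 \<and> r mod 4 = 3 then -1 else 1)"
  proof -
    have "even ((q - 1) div 2 * ((r - 1) div 2)) \<longleftrightarrow> \<not>(q mod 4 = 3 \<and> r mod 4 = 3)"
      using oq by (simp add: even_mult_iff) presburger
    then show ?thesis by (auto simp: neg_one_even_power neg_one_odd_power)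
  qed
  then show ?thesis using QR nq nr leg_vals[OF assms(1,2), of "int r"] leg_vals[OF assms(3,4), of "int q"]
    by auto
qed


definition JP :: "nat set \<Rightarrow> int \<Rightarrow> int" where "JP P n = (\<Prod>r\<in>P. Legendre n (int r))"

definition oddprimes :: "nat set \<Rightarrow> bool" where
  "oddprimes P \<longleftrightarrow> finite P \<and> (\<forall>r\<in>P. prime r \<and> r > 2)"

lemma JP_mult: "oddprimes P \<Longrightarrow> JP P (a * b) = JP P a * JP P b"
  unfolding JP_def oddprimes_def by (simp add: leg_mult prod.distrib)

lemma JP_1: "oddprimes P \<Longrightarrow> JP P 1 = 1"
  unfolding JP_def oddprimes_def by (simp add: leg_1)

lemma JP_cong: assumes "oddprimes P" "[a = b] (mod int (\<Prod>P))" shows "JP P a = JP P b"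
  unfolding JP_def
proof (rule prod.cong[OF refl])
  fix r assume r: "r \<in> P"
  then have "r dvd \<Prod>P" using assms(1) dvd_prodI[of P r "\<lambda>x. x"] unfolding oddprimes_def by simp
  then have "[a = b] (mod int r)" using assms(2) cong_dvd_modulus by (metis of_nat_dvd_iff)
  then show "Legendre a (int r) = Legendre b (int r)" using r assms(1) leg_cong unfolding oddprimes_def by blast
qed

lemma c4_odd_nat: assumes "odd r" shows "c4 (int r) = (if r mod 4 = 3 then -1 else 1)"
proof -
  have "r mod 4 = 1 \<or> r mod 4 = 3" using assms by presburger
  moreover have "int r mod 4 = int (r mod 4)" by (simp add: of_nat_mod)
  ultimately show ?thesis unfolding c4_def using assms by auto
qed

lemma JP_recip:
  assumes "oddprimes P" "prime q" "q > 2" "q \<notin> P"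
  shows "Legendre (int (\<Prod>P)) (int q) = JP P (int q) * (if q mod 4 = 3 then c4 (int (\<Prod>P)) else 1)"
proof -
  have "finite P" using assms(1) oddprimes_def by auto
  then show ?thesis using assms
  proof (induction P rule: finite_induct)
    case empty then show ?case using leg_1[OF assms(2,3)] by (simp add: JP_def)
  next
    case (insert r P)
    have op: "oddprimes P" using insert.prems(1) unfolding oddprimes_def by auto
    have r: "prime r" "r > 2" "r \<noteq> q" using insert.prems unfolding oddprimes_def by auto
    have IH: "Legendre (int (\<Prod>P)) (int q) = JP P (int q) * (if q mod 4 = 3 then c4 (int (\<Prod>P)) else 1)"
      using insert op by auto
    have rec: "Legendre (int r) (int q) = Legendre (int q) (int r) * (if q mod 4 = 3 \<and> r mod 4 = 3 then -1 else 1)"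
      using leg_recip[of q r] r assms(2,3) by auto
    have c4r: "c4 (int r) = (if r mod 4 = 3 then -1 else 1)" using r prime_odd_nat c4_odd_nat by auto
    have "Legendre (int (\<Prod>(insert r P))) (int q) = Legendre (int r * int (\<Prod>P)) (int q)"
      using insert by simp
    also have "\<dots> = Legendre (int r) (int q) * Legendre (int (\<Prod>P)) (int q)"
      using leg_mult[OF assms(2,3)] by blast
    also have "\<dots> = JP (insert r P) (int q) * (if q mod 4 = 3 then c4 (int (\<Prod>(insert r P))) else 1)"
      unfolding rec IH using insert(1,2) c4r by (simp add: JP_def c4_mult)
    finally show ?case .
  qed
qed

lemma mult_prod:
  assumes "\<And>a b. f (a * b) = f a * f b" "f 1 = 1"
  shows "f (\<Prod>i\<in>S. g i) = (\<Prod>i\<in>S. f (g i))"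
  by (induction S rule: infinite_finite_induct) (auto simp: assms)

lemma mult_power:
  assumes "\<And>a b. f (a * b) = f a * f b" "f 1 = 1"
  shows "f (x ^ k) = f x ^ k"
  by (induction k) (auto simp: assms)

lemma sqf_prod: assumes "(n::nat) > 0" "squarefree n" shows "\<Prod>(prime_factors n) = n"
proof -
  have "n = (\<Prod>p\<in>prime_factors n. p ^ multiplicity p n)" using prime_factorization_nat assms(1) by blast
  also have "\<dots> = (\<Prod>p\<in>prime_factors n. p)"
    using assms squarefree_factorial_semiring'[of n] by (intro prod.cong) auto
  finally show ?thesis by simp
qed

lemma sqf_int_nat: assumes "squarefree (m::int)" "m > 0" shows "squarefree (nat m)"
proof (rule squarefreeI)
  fix x :: nat assume "x^2 dvd nat m"
  then have "int (x ^ 2) dvd int (nat m)" by (simp only: of_nat_dvd_iff)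
  then have "int x ^ 2 dvd m" using assms(2) by simp
  then have "is_unit (int x)" using assms squarefreeD by blast
  then show "x dvd 1" by simp
qed

lemma oddprimes_pf: assumes "odd (n::nat)" shows "oddprimes (prime_factors n)"
proof -
  have "prime r \<and> r > 2" if r: "r \<in> prime_factors n" for r
  proof -
    from r have "prime r" "r dvd n" by auto
    moreover have "r \<noteq> 2" using assms calculation(2) by auto
    ultimately show "prime r \<and> r > 2" using prime_ge_2_nat[of r] by auto
  qed
  then show ?thesis unfolding oddprimes_def by auto
qed


lemma build_char:
  fixes A :: "int \<Rightarrow> int" and e d :: int and P :: "nat set"
  assumes op: "oddprimes P" and e: "e > 0" and cop: "coprime e (int (\<Prod>P))"
    and A1: "A 1 = 1"
    and Aper: "\<And>a b. [a = b] (mod e) \<Longrightarrow> A a = A b"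
    and d: "d = e * int (\<Prod>P)"
    and wit: "P \<noteq> {} \<or> (\<exists>a. coprime a e \<and> A a = -1)"
  shows "\<exists>a. coprime a d \<and> A a * JP P a = -1"
proof (cases "P = {}")
  case True
  then show ?thesis using wit d by (auto simp: JP_def)
next
  case False
  then obtain r0 where r0: "r0 \<in> P" by auto
  have fin: "finite P" using op oddprimes_def by auto
  have r0p: "prime r0" "r0 > 2" using op r0 oddprimes_def by auto
  obtain n0 where n0: "Legendre n0 (int r0) = -1" using leg_nonres[OF r0p] by auto
  let ?Q = "P - {r0}"
  have opQ: "oddprimes ?Q" using op unfolding oddprimes_def by auto
  define R where "R = e * int (\<Prod>?Q)"
  have prodP: "\<Prod>P = r0 * \<Prod>?Q" using fin r0 by (simp add: prod.remove)
  have "\<not> r0 dvd \<Prod>?Q"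
  proof
    assume "r0 dvd \<Prod>?Q"
    then obtain r where r: "r \<in> ?Q" "r0 dvd r" using prime_dvd_prod_iff[of ?Q r0 "\<lambda>x. x"] fin r0p by auto
    then have "prime r" using opQ oddprimes_def by auto
    then have "r0 = r" using r r0p primes_dvd_imp_eq by blast
    then show False using r by auto
  qed
  then have "coprime r0 (\<Prod>?Q)" using r0p prime_imp_coprime by blast
  then have c1: "coprime (int r0) (int (\<Prod>?Q))" by (simp only: coprime_int_iff)
  have c2: "coprime (int r0) e" using cop unfolding prodP by (simp add: coprime_commute)
  have cR: "coprime (int r0) R" unfolding R_def using c1 c2 by simp
  obtain a where a: "[a = n0] (mod int r0)" "[a = 1] (mod R)"
    using binary_chinese_remainder_int[OF cR] by blast
  have ae: "[a = 1] (mod e)" using cong_dvd_modulus[OF a(2), of e] unfolding R_def by simp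
  have aQ: "[a = 1] (mod int (\<Prod>?Q))" using cong_dvd_modulus[OF a(2), of "int (\<Prod>?Q)"] unfolding R_def by simp
  have "JP P a = Legendre a (int r0) * JP ?Q a" unfolding JP_def using fin r0 by (simp add: prod.remove)
  also have "Legendre a (int r0) = -1" using leg_cong[OF r0p a(1)] n0 by simp
  also have "JP ?Q a = 1" using JP_cong[OF opQ aQ] JP_1[OF opQ] by simp
  finally have J: "JP P a = -1" by simp
  have "A a = 1" using Aper[OF ae] A1 by simp
  moreover have "coprime a d"
  proof -
    have "\<not> int r0 dvd a" using leg_zero_iff[OF r0p, of a] leg_cong[OF r0p a(1)] n0 by auto
    moreover have "prime (int r0)" using r0p by simp
    ultimately have "coprime (int r0) a" using prime_imp_coprime by blast
    then have "coprime a (int r0)" by (simp add: coprime_commute)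
    moreover have "coprime a R" using cong_imp_coprime[OF cong_sym[OF a(2)]] by simp
    moreover have "d = int r0 * R" unfolding d R_def prodP by simp
    ultimately show ?thesis by simp
  qed
  ultimately show ?thesis using J by auto
qed

lemma kron_psi:
  fixes \<psi> :: "int \<Rightarrow> int"
  assumes mul: "\<And>a b. \<psi> (a * b) = \<psi> a * \<psi> b" and one: "\<psi> 1 = 1"
    and pr: "\<And>q. prime q \<Longrightarrow> kron_prime d q = \<psi> (int q)"
    and n: "n > 0"
  shows "kronecker d n = \<psi> n"
proof -
  define N where "N = nat n"
  have nN: "n = int N" "N > 0" using n unfolding N_def by auto
  have "kronecker d n = (\<Prod>q\<in>prime_factors N. kron_prime d q ^ multiplicity q N)"
    unfolding kronecker_def using n N_def by simp
  also have "\<dots> = (\<Prod>q\<in>prime_factors N. \<psi> (int q) ^ multiplicity q N)"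
    using pr by (intro prod.cong refl) (metis in_prime_factors_iff)
  also have "\<dots> = (\<Prod>q\<in>prime_factors N. \<psi> (int q ^ multiplicity q N))"
    using mult_power[of \<psi>, OF mul one] by simp
  also have "\<dots> = \<psi> (\<Prod>q\<in>prime_factors N. int q ^ multiplicity q N)"
    using mult_prod[of \<psi>, OF mul one, of "\<lambda>q. int q ^ multiplicity q N" "prime_factors N"] by simp
  also have "(\<Prod>q\<in>prime_factors N. int q ^ multiplicity q N) = int N"
  proof -
    have "(\<Prod>q\<in>prime_factors N. int q ^ multiplicity q N) = int (\<Prod>q\<in>prime_factors N. q ^ multiplicity q N)"
      by simp
    also have "\<dots> = int N" using prime_factorization_nat[OF nN(2)] by simp
    finally show ?thesis .
  qed
  finally show ?thesis using nN by simp
qed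


lemma assemble:
  fixes A :: "int \<Rightarrow> int" and e d :: int and P :: "nat set"
  assumes op: "oddprimes P" and e: "e > 0" and cop: "coprime e (int (\<Prod>P))"
    and Amul: "\<And>a b. A (a * b) = A a * A b" and A1: "A 1 = 1"
    and Aper: "\<And>a b. [a = b] (mod e) \<Longrightarrow> A a = A b"
    and d: "d = e * int (\<Prod>P)"
    and wit: "P \<noteq> {} \<or> (\<exists>a. coprime a e \<and> A a = -1)"
    and kp: "\<And>q. prime q \<Longrightarrow> kron_prime d q = A (int q) * JP P (int q)"
  shows "\<exists>\<psi>. (\<forall>a b. \<psi> (a*b) = \<psi> a * \<psi> b) \<and> \<psi> 1 = 1 \<and> (\<forall>a. \<psi> (a mod d) = \<psi> a)
             \<and> (\<forall>n>0. kronecker d n = \<psi> n) \<and> (\<exists>a. coprime a d \<and> \<psi> a = -1)"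
proof (intro exI[of _ "\<lambda>n. A n * JP P n"] conjI allI impI)
  show m: "A (a * b) * JP P (a * b) = A a * JP P a * (A b * JP P b)" for a b
    using Amul JP_mult[OF op] by simp
  show o: "A 1 * JP P 1 = 1" using A1 JP_1[OF op] by simp
  show "A (a mod d) * JP P (a mod d) = A a * JP P a" for a
  proof -
    have c: "[a mod d = a] (mod d)" by (simp add: cong_def)
    have "[a mod d = a] (mod e)" using cong_dvd_modulus[OF c, of e] d by simp
    moreover have "[a mod d = a] (mod int (\<Prod>P))" using cong_dvd_modulus[OF c, of "int (\<Prod>P)"] d by simp
    ultimately show ?thesis using Aper JP_cong[OF op] by metis
  qed
  show "kronecker d n = A n * JP P n" if "n > 0" for n
    using kron_psi[of "\<lambda>n. A n * JP P n" d n] m o kp that by auto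
  show "\<exists>a. coprime a d \<and> A a * JP P a = -1"
    using build_char[OF op e cop A1 Aper d wit] .
qed

lemma kron_prime_2: "kron_prime d 2 = c8 d"
  unfolding kron_prime_def c8_def by simp

lemma kron_prime_odd: "q \<noteq> 2 \<Longrightarrow> kron_prime d q = Legendre d (int q)"
  unfolding kron_prime_def by simp

lemma JP_zero: assumes "oddprimes P" "q \<in> P" shows "JP P (int q) = 0"
proof -
  have "Legendre (int q) (int q) = 0" using assms leg_zero_iff unfolding oddprimes_def by auto
  then show ?thesis unfolding JP_def using assms unfolding oddprimes_def by (intro prod_zero) auto
qed

lemma JP_2: "oddprimes P \<Longrightarrow> JP P 2 = c8 (int (\<Prod>P))"
proof -
  assume op: "oddprimes P"
  have "JP P 2 = (\<Prod>r\<in>P. c8 (int r))" unfolding JP_def using op leg_2 unfolding oddprimes_def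
    by (intro prod.cong) auto
  also have "\<dots> = c8 (\<Prod>r\<in>P. int r)" using mult_prod[of c8, OF c8_mult c8_1, of int P] by simp
  finally show ?thesis by simp
qed

lemma c8_sq: "odd q \<Longrightarrow> c8 q * c8 q = 1" unfolding c8_def by auto

lemma odd_prime_gt2: "prime (q::nat) \<Longrightarrow> q \<noteq> 2 \<Longrightarrow> q > 2 \<and> odd q"
  using prime_ge_2_nat[of q] prime_odd_nat[of q] by fastforce

theorem char_props:
  assumes "real_quadratic_disc d"
  shows "\<exists>\<psi>. (\<forall>a b. \<psi> (a*b) = \<psi> a * \<psi> b) \<and> \<psi> 1 = 1 \<and> (\<forall>a. \<psi> (a mod d) = \<psi> a)
             \<and> (\<forall>n>0. kronecker d n = \<psi> n) \<and> (\<exists>a. coprime a d \<and> \<psi> a = -1)"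
proof -
  have d0: "d > 0" "d \<noteq> 1" using assms unfolding real_quadratic_disc_def fundamental_discriminant_def by auto
  have "(d mod 4 = 1 \<and> squarefree d) \<or> (\<exists>m. d = 4 * m \<and> (m mod 4 = 2 \<or> m mod 4 = 3) \<and> squarefree m)"
    using assms unfolding real_quadratic_disc_def fundamental_discriminant_def by auto
  then show ?thesis
  proof
    assume "d mod 4 = 1 \<and> squarefree d"
    then have d1: "d mod 4 = 1" and sq: "squarefree d" by auto
    define D where "D = nat d"
    have dD: "d = int D" using d0 D_def by simp
    have oD: "odd D" using d1 dD by presburger
    define P where "P = prime_factors D"
    have op: "oddprimes P" unfolding P_def using oddprimes_pf[OF oD] .
    have pP: "\<Prod>P = D" unfolding P_def using sqf_prod[of D] sqf_int_nat[OF sq d0(1)] d0 D_def by simp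
    show ?thesis
    proof (rule assemble[of P 1 "\<lambda>_. 1"])
      show "oddprimes P" by (rule op)
      show "P \<noteq> {} \<or> (\<exists>a. coprime a 1 \<and> (1::int) = -1)"
        using pP dD d0 by auto
      show "d = 1 * int (\<Prod>P)" using pP dD by simp
      fix q :: nat assume q: "prime q"
      show "kron_prime d q = 1 * JP P (int q)"
      proof (cases "q = 2")
        case True
        then show ?thesis using kron_prime_2 JP_2[OF op] pP dD by simp
      next
        case False
        then have q2: "q > 2" "odd q" using odd_prime_gt2 q by auto
        show ?thesis
        proof (cases "q \<in> P")
          case True
          then have "q dvd D" unfolding P_def by auto
          then have "Legendre d (int q) = 0" using leg_zero_iff[OF q q2(1)] dD by simp
          then show ?thesis using JP_zero[OF op True] kron_prime_odd[OF False] by simp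
        next
          case nP: False
          have "c4 d = 1" using d1 unfolding c4_def by presburger
          then show ?thesis using JP_recip[OF op q q2(1) nP] kron_prime_odd[OF False] pP dD by simp
        qed
      qed
    qed (auto)
  next
    assume "\<exists>m. d = 4 * m \<and> (m mod 4 = 2 \<or> m mod 4 = 3) \<and> squarefree m"
    then obtain m where dm: "d = 4 * m" and m3: "m mod 4 = 2 \<or> m mod 4 = 3" and sq: "squarefree m" by blast
    have m0: "m > 0" using dm d0 by simp
    from m3 have "m mod 4 = 3 \<or> m mod 4 = 2" by auto
    then show ?thesis
    proof (elim disjE)
      assume m3: "m mod 4 = 3"
      define M where "M = nat m"
      have mM: "m = int M" using m0 M_def by simp
      have oM: "odd M" using m3 mM by presburger
      define P where "P = prime_factors M"
      have op: "oddprimes P" unfolding P_def using oddprimes_pf[OF oM] .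
      have pP: "\<Prod>P = M" unfolding P_def using sqf_prod[of M] sqf_int_nat[OF sq m0] m0 M_def by simp
      have c4m: "c4 m = -1" using m3 unfolding c4_def by presburger
      show ?thesis
      proof (rule assemble[of P 4 c4])
        show "oddprimes P" by (rule op)
        show "coprime 4 (int (\<Prod>P))"
          using pP mM oM coprime_power_left_iff[of 2 2 "int M"] coprime_left_2_iff_odd[of "int M"] by simp
        show "c4 (a * b) = c4 a * c4 b" for a b by (rule c4_mult)
        show "c4 a = c4 b" if "[a = b] (mod 4)" for a b using that c4_mod unfolding cong_def by metis
        show "P \<noteq> {} \<or> (\<exists>a. coprime a 4 \<and> c4 a = -1)" using pP mM m3 by auto
        show "d = 4 * int (\<Prod>P)" using pP mM dm by simp
        fix q :: nat assume q: "prime q"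
        show "kron_prime d q = c4 (int q) * JP P (int q)"
        proof (cases "q = 2")
          case True
          have "c8 d = 0" using dm unfolding c8_def by simp
          moreover have "c4 2 = 0" unfolding c4_def by simp
          ultimately show ?thesis using True kron_prime_2 by simp
        next
          case False
          then have q2: "q > 2" "odd q" using odd_prime_gt2 q by auto
          show ?thesis
          proof (cases "q \<in> P")
            case True
            then have "q dvd M" unfolding P_def by auto
            then have "int q dvd d" using dm mM by simp
            then have "Legendre d (int q) = 0" using leg_zero_iff[OF q q2(1)] by simp
            then show ?thesis using JP_zero[OF op True] kron_prime_odd[OF False] by simp
          next
            case nP: False
            have "Legendre d (int q) = Legendre 2 (int q) * (Legendre 2 (int q) * Legendre m (int q))"
              using leg_mult[OF q q2(1)] dm by (metis mult.assoc numeral_Bit0_eq_double mult_2)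
            also have "\<dots> = c8 (int q) * c8 (int q) * Legendre m (int q)" using leg_2[OF q q2(1)] by simp
            also have "\<dots> = Legendre m (int q)" using c8_sq[of "int q"] q2 by simp
            also have "\<dots> = JP P (int q) * (if q mod 4 = 3 then c4 m else 1)"
              using JP_recip[OF op q q2(1) nP] pP mM by simp
            also have "\<dots> = c4 (int q) * JP P (int q)" using c4m c4_odd_nat[OF q2(2)] by simp
            finally show ?thesis using kron_prime_odd[OF False] by simp
          qed
        qed
      qed (auto simp: c4_def)
    next
      assume m2: "m mod 4 = 2"
      define M where "M = nat (m div 2)"
      have "int M = m div 2" using m0 M_def by simp
      then have mM: "m = 2 * int M" using m2 by presburger
      have oM: "odd M" using m2 mM by presburger
      have sqM: "squarefree (m div 2)" using sq squarefree_mono[of "m div 2" m] mM by simp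
      have M0: "m div 2 > 0" using mM oM by presburger
      define P where "P = prime_factors M"
      have op: "oddprimes P" unfolding P_def using oddprimes_pf[OF oM] .
      have pP: "\<Prod>P = M" unfolding P_def using sqf_prod[of M] sqf_int_nat[OF sqM M0] M0 M_def by simp
      define A where "A = (\<lambda>n. c8 n * (if M mod 4 = 3 then c4 n else 1))"
      show ?thesis
      proof (rule assemble[of P 8 A])
        show "oddprimes P" by (rule op)
        show "coprime 8 (int (\<Prod>P))"
          using pP oM coprime_power_left_iff[of 2 3 "int M"] coprime_left_2_iff_odd[of "int M"] by simp
        show "A (a * b) = A a * A b" for a b unfolding A_def by (simp add: c4_mult c8_mult)
        show "A 1 = 1" unfolding A_def by simp
        show "A a = A b" if "[a = b] (mod 8)" for a b
        proof -
          have "[a = b] (mod 4)" using cong_dvd_modulus[OF that, of 4] by simp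
          then show ?thesis using that c4_mod c8_mod unfolding cong_def A_def by metis
        qed
        show "P \<noteq> {} \<or> (\<exists>a. coprime a 8 \<and> A a = -1)"
        proof (cases "P = {}")
          case True
          then have "M = 1" using pP by simp
          then have "A 3 = -1" unfolding A_def c8_def by simp
          moreover have "coprime (8::int) 3"
            using coprime_power_left_iff[of "2::int" 3 3] coprime_left_2_iff_odd[of "3::int"] by simp
          then have "coprime (3::int) 8" by (simp add: coprime_commute)
          ultimately show ?thesis by blast
        qed simp
        show "d = 8 * int (\<Prod>P)" using pP mM dm by simp
        fix q :: nat assume q: "prime q"
        show "kron_prime d q = A (int q) * JP P (int q)"
        proof (cases "q = 2")
          case True
          have "c8 d = 0" using dm unfolding c8_def by simp
          moreover have "c8 2 = 0" unfolding c8_def by simp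
          ultimately show ?thesis using True kron_prime_2 unfolding A_def by simp
        next
          case False
          then have q2: "q > 2" "odd q" using odd_prime_gt2 q by auto
          show ?thesis
          proof (cases "q \<in> P")
            case True
            then have "q dvd M" unfolding P_def by auto
            then have "int q dvd d" using dm mM by simp
            then have "Legendre d (int q) = 0" using leg_zero_iff[OF q q2(1)] by simp
            then show ?thesis using JP_zero[OF op True] kron_prime_odd[OF False] by simp
          next
            case nP: False
            have dd: "d = 2 * (2 * (2 * int M))" using dm mM by simp
            have "Legendre d (int q) = Legendre 2 (int q) * (Legendre 2 (int q) * (Legendre 2 (int q) * Legendre (int M) (int q)))"
            proof -
              have "Legendre d (int q) = Legendre 2 (int q) * Legendre (2 * (2 * int M)) (int q)"
                unfolding dd by (rule leg_mult[OF q q2(1)])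
              moreover have "Legendre (2 * (2 * int M)) (int q) = Legendre 2 (int q) * Legendre (2 * int M) (int q)"
                by (rule leg_mult[OF q q2(1)])
              moreover have "Legendre (2 * int M) (int q) = Legendre 2 (int q) * Legendre (int M) (int q)"
                by (rule leg_mult[OF q q2(1)])
              ultimately show ?thesis by simp
            qed
            also have "\<dots> = c8 (int q) * (c8 (int q) * c8 (int q)) * Legendre (int M) (int q)" using leg_2[OF q q2(1)] by simp
            also have "\<dots> = c8 (int q) * Legendre (int M) (int q)" using c8_sq[of "int q"] q2 by simp
            also have "\<dots> = c8 (int q) * (JP P (int q) * (if q mod 4 = 3 then c4 (int M) else 1))"
              using JP_recip[OF op q q2(1) nP] pP by simp
            also have "\<dots> = A (int q) * JP P (int q)"
            proof -
              have "c4 (int M) = (if M mod 4 = 3 then -1 else 1)" using c4_odd_nat[OF oM] .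
              then show ?thesis unfolding A_def using c4_odd_nat[OF q2(2)] by auto
            qed
            finally show ?thesis using kron_prime_odd[OF False] by simp
          qed
        qed
      qed (auto)
    qed
  qed
qed


lemma kron_consequences:
  assumes rq: "real_quadratic_disc d" and p0: "p > 0" and pp': "[p * p' = 1] (mod d)"
  shows "kronecker d 0 = 0"
    and "(\<Sum>j\<in>{0<..<d}. kronecker d j) = 0"
    and "\<And>t. t \<ge> 0 \<Longrightarrow> kronecker d ((p' * t) mod d) = kronecker d p * kronecker d t"
proof -
  have d0: "d > 1" using rq unfolding real_quadratic_disc_def fundamental_discriminant_def by auto
  show k0: "kronecker d 0 = 0" using d0 unfolding kronecker_def by simp
  obtain \<psi> where mul: "\<And>a b. \<psi> (a*b) = \<psi> a * \<psi> b" and one: "\<psi> 1 = 1"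
    and per: "\<And>a. \<psi> (a mod d) = \<psi> a" and kr: "\<And>n. n > 0 \<Longrightarrow> kronecker d n = \<psi> n"
    and wit: "\<exists>a. coprime a d \<and> \<psi> a = -1"
    using char_props[OF rq] by blast
  obtain a where a: "coprime a d" "\<psi> a = -1" using wit by blast
  have psi0: "\<psi> 0 = 0" using mul[of a 0] a(2) by simp
  have kr0: "kronecker d x = \<psi> x" if "x \<ge> 0" for x
    using that kr k0 psi0 by (cases "x = 0") auto
  define f where "f j = (a * j) mod d" for j
  have inj: "inj_on f {0..<d}"
  proof (rule inj_onI)
    fix i j assume ij: "i \<in> {0..<d}" "j \<in> {0..<d}" "f i = f j"
    then have "[a * i = a * j] (mod d)" unfolding f_def cong_def by simp
    then have "[i = j] (mod d)" using a(1) cong_mult_lcancel by blast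
    then show "i = j" using ij unfolding cong_def by auto
  qed
  have sub: "f ` {0..<d} \<subseteq> {0..<d}" unfolding f_def using d0 by auto
  have img: "f ` {0..<d} = {0..<d}"
    using card_subset_eq[OF _ sub] card_image[OF inj] by simp
  have "(\<Sum>j\<in>{0..<d}. \<psi> j) = (\<Sum>j\<in>f ` {0..<d}. \<psi> j)" using img by simp
  also have "\<dots> = (\<Sum>j\<in>{0..<d}. \<psi> (f j))" using sum.reindex[OF inj] by simp
  also have "\<dots> = (\<Sum>j\<in>{0..<d}. \<psi> a * \<psi> j)" unfolding f_def using per mul by simp
  also have "\<dots> = - (\<Sum>j\<in>{0..<d}. \<psi> j)" using a(2) by (simp add: sum_negf)
  finally have s0: "(\<Sum>j\<in>{0..<d}. \<psi> j) = 0" by simp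
  have "{0..<d} = insert 0 {0<..<d}" using d0 by auto
  then have "(\<Sum>j\<in>{0..<d}. \<psi> j) = \<psi> 0 + (\<Sum>j\<in>{0<..<d}. \<psi> j)" by simp
  then have "(\<Sum>j\<in>{0<..<d}. \<psi> j) = 0" using s0 psi0 by simp
  then show "(\<Sum>j\<in>{0<..<d}. kronecker d j) = 0" using kr by simp
  fix t :: int assume t: "t \<ge> 0"
  have "\<psi> p * \<psi> p' = 1"
  proof -
    have "\<psi> p * \<psi> p' = \<psi> ((p * p') mod d)" using mul per by simp
    also have "(p * p') mod d = 1 mod d" using pp' unfolding cong_def .
    also have "\<psi> (1 mod d) = 1" using per one by simp
    finally show ?thesis .
  qed
  then have "\<psi> p' = \<psi> p" using zmult_eq_1_iff by auto
  have "kronecker d ((p' * t) mod d) = \<psi> ((p' * t) mod d)" using d0 by (intro kr0) simp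
  also have "\<dots> = \<psi> p' * \<psi> t" using per mul by simp
  also have "\<dots> = kronecker d p * kronecker d t" using \<open>\<psi> p' = \<psi> p\<close> kr[OF p0] kr0[OF t] by simp
  finally show "kronecker d ((p' * t) mod d) = kronecker d p * kronecker d t" .
qed


lemma fermat_int: assumes "prime (p::int)" "\<not> p dvd a" shows "[a ^ nat (p - 1) = 1] (mod p)"
proof -
  define q where "q = nat p"
  have pq: "p = int q" using assms(1) q_def prime_ge_0_int by auto
  have qp: "prime q" using assms(1) q_def prime_nat_iff_prime by blast
  define b where "b = nat (a mod p)"
  have "p > 0" using assms(1) prime_gt_0_int by blast
  then have "a mod p \<ge> 0" by simp
  then have ab: "int b = a mod p" using b_def by simp
  have "\<not> q dvd b"
  proof
    assume "q dvd b"
    then have "p dvd a mod p" using ab pq by (metis of_nat_dvd_iff)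
    then show False using assms(2) by (simp add: dvd_mod_iff)
  qed
  then have "[b ^ (q - 1) = 1] (mod q)" using fermat_theorem qp by blast
  then have "[int (b ^ (q - 1)) = int 1] (mod int q)" by (simp only: cong_int_iff)
  then have "[int b ^ (q - 1) = 1] (mod int q)" by simp
  then have "[(a mod p) ^ (q - 1) = 1] (mod p)" using ab pq by simp
  moreover have "[(a mod p) ^ (q - 1) = a ^ (q - 1)] (mod p)" by (simp add: cong_def power_mod)
  moreover have "q - 1 = nat (p - 1)" using pq by simp
  ultimately show ?thesis by (metis cong_sym cong_trans)
qed

lemma telescope:
  fixes f h :: "int \<Rightarrow> rat" and D :: nat
  assumes per: "\<And>i. f (i + int D) = f i"
  shows "(\<Sum>k<P. f (int k) * (h (int k + int D) - h (int k))) =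
         (\<Sum>t<D. f (int t + int P) * h (int t + int P)) - (\<Sum>t<D. f (int t) * h (int t))"
proof (induction P)
  case 0 then show ?case by simp
next
  case (Suc P)
  define G where "G t = f (int t + int P) * h (int t + int P)" for t
  have "(\<Sum>t<D. f (int t + int (Suc P)) * h (int t + int (Suc P))) = (\<Sum>t<D. G (Suc t))"
    unfolding G_def by (intro sum.cong refl) (simp add: algebra_simps)
  also have "\<dots> = (\<Sum>t<D. G (Suc t) - G t) + (\<Sum>t<D. G t)" by (simp add: sum_subtractf)
  also have "(\<Sum>t<D. G (Suc t) - G t) = G D - G 0" by (rule sum_lessThan_telescope)
  also have "G D - G 0 = f (int P) * (h (int P + int D) - h (int P))"
    unfolding G_def using per[of "int P"] by (simp add: algebra_simps)
  finally show ?case using Suc by (simp add: G_def algebra_simps)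
qed


theorem mainTheorem9:
  fixes d p p' :: int and \<beta> :: "int \<Rightarrow> int"
  assumes "real_quadratic_disc d"
    and "prime p" and "odd p" and "\<not> p dvd d"
    and "[p * p' = 1] (mod d)"
    and "\<And>i. \<beta> i = (\<Sum>j\<in>{0<..<(p' * i) mod d}. kronecker d j)"
  shows "rat_cong (\<Sum>i=1..p-1. of_int (\<beta> i) / of_int i)
           (- (1 / of_int d) * of_int (kronecker d p) *
              (\<Sum>c=1..d-1. of_int (kronecker d c) *
                  (bernpoly (nat (p - 1)) (of_int c / of_int d) - bernoulli (nat (p - 1)))))
           p"
proof -
  note pp = assms(2)
  have d1: "d > 1" using assms(1) unfolding real_quadratic_disc_def fundamental_discriminant_def by auto
  have p2: "p \<ge> 2" using pp prime_ge_2_int by blast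
  have p3: "p \<ge> 3" using p2 assms(3) by presburger
  have p0: "p > 0" using p3 by simp
  define n where "n = nat (p - 1)"
  define P where "P = nat p"
  define D where "D = nat d"
  define m where "m = n - 1"
  have nn: "int n = p - 1" "int P = p" "int D = d" "m \<ge> 1" "n = Suc m" "int n < p"
    using p3 d1 unfolding n_def P_def D_def m_def by auto
  have K0: "kronecker d 0 = 0" and Ksum: "(\<Sum>j\<in>{0<..<d}. kronecker d j) = 0"
    and Kmul: "\<And>t. t \<ge> 0 \<Longrightarrow> kronecker d ((p' * t) mod d) = kronecker d p * kronecker d t"
    using kron_consequences[OF assms(1) p0 assms(5)] by auto
  define S where "S a = (\<Sum>j\<in>{0<..<a}. kronecker d j)" for a
  have beta: "\<beta> i = S ((p' * i) mod d)" for i using assms(6) S_def by simp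
  have Ssucc: "S (a + 1) = S a + kronecker d a" if "a \<ge> 0" for a
  proof (cases "a = 0")
    case True
    have "{0<..<(1::int)} = {}" by auto
    then show ?thesis using K0 True by (simp add: S_def)
  next
    case False
    then have "{0<..<a+1} = insert a {0<..<a}" using that by auto
    then show ?thesis unfolding S_def by simp
  qed
  have bper: "\<beta> (i + d) = \<beta> i" for i
  proof -
    have "(p' * (i + d)) mod d = (p' * i + p' * d) mod d" by (simp add: algebra_simps)
    also have "\<dots> = (p' * i) mod d" by simp
    finally show ?thesis using beta by simp
  qed
  have bstep: "\<beta> (t + p) = \<beta> t + kronecker d p * kronecker d t" if t: "t \<ge> 0" for t
  proof -
    define a where "a = (p' * t) mod d"
    have a: "0 \<le> a" "a < d" using d1 unfolding a_def by auto
    have "[p' * t + p' * p = a + 1] (mod d)"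
      using cong_add[of "p' * t" a d "p' * p" 1] assms(5) unfolding a_def
      by (simp add: cong_def mult.commute)
    then have e: "(p' * (t + p)) mod d = (a + 1) mod d" unfolding cong_def by (simp add: algebra_simps)
    have "S ((a + 1) mod d) = S (a + 1)"
    proof (cases "a + 1 < d")
      case True then show ?thesis using a by simp
    next
      case False
      then have "a + 1 = d" using a by simp
      then show ?thesis using Ksum unfolding S_def by simp
    qed
    then have "\<beta> (t + p) = S a + kronecker d a" using beta e Ssucc[OF a(1)] by simp
    then show ?thesis using beta Kmul[OF t] unfolding a_def by simp
  qed
  define b where "b i = (of_int (\<beta> i) :: rat)" for i
  define h where "h i = bG n (of_int i / of_int d)" for i
  define c where "c i = (of_int (kronecker d i) :: rat)" for i
  define W where "W = (\<Sum>t<D. c (int t) * h (int t))"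
  define Y where "Y = (\<Sum>k<P. b (int k) * of_int (int k) ^ m)"
  have pint_h: "pint p (h i)" for i
    unfolding h_def using pint_bG[OF pp nn(6) pint_frac[OF pp assms(4)]] by simp
  have pint_b: "pint p (b i)" for i unfolding b_def by (rule pint_int[OF pp])
  have pint_c: "pint p (c i)" for i unfolding c_def by (rule pint_int[OF pp])
  have pint_W: "pint p W" unfolding W_def using pint_c pint_h by (intro pint_sum[OF pp] pint_mult[OF pp])
  have pint_nat: "pint p (of_nat k)" for k using pint_int[OF pp, of "int k"] by simp
  have pint_Y: "pint p Y" unfolding Y_def using pint_b pint_nat
    by (intro pint_sum[OF pp] pint_mult[OF pp] pint_power[OF pp]) auto
  have step1: "pcong p (\<Sum>i=1..p-1. of_int (\<beta> i) / of_int i) Y"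
  proof -
    have "pcong p (\<Sum>i=1..p-1. of_int (\<beta> i) / of_int i) (\<Sum>i=1..p-1. b i * of_int i ^ m)"
    proof (rule pcong_sum[OF pp])
      fix i assume i: "i \<in> {1..p-1}"
      then have ndvd: "\<not> p dvd i" using zdvd_not_zless by auto
      have "[i ^ nat (p - 1) = 1] (mod p)" using fermat_int[OF pp ndvd] .
      then have "p dvd i ^ n - 1" unfolding n_def by (simp add: cong_iff_dvd_diff)
      then obtain k where k: "i ^ n - 1 = p * k" by (auto simp: dvd_def)
      have inz: "(of_int i :: rat) \<noteq> 0" using i by auto
      have "1 / of_int i - of_int i ^ m = (of_int (1 - i ^ n) / of_int i :: rat)"
        using inz nn(5) by (simp add: field_simps)
      also have "\<dots> = of_int p * (of_int (- k) / of_int i)" using k by (simp add: algebra_simps)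
      finally have e: "1 / of_int i - of_int i ^ m = (of_int p * (of_int (- k) / of_int i) :: rat)" .
      have "pcong p (1 / of_int i) (of_int i ^ m)"
        unfolding pcong_def using e pint_frac[OF pp ndvd, of 1] pint_frac[OF pp ndvd, of "-k"]
          pint_power[OF pp pint_int[OF pp, of i]] by auto
      then have "pcong p (b i * (1 / of_int i)) (b i * of_int i ^ m)"
        by (rule pcong_mult[OF pp pcong_eq[OF pp pint_b refl]])
      then show "pcong p (of_int (\<beta> i) / of_int i) (b i * of_int i ^ m)" unfolding b_def by simp
    qed
    moreover have "(\<Sum>i=1..p-1. b i * of_int i ^ m) = Y"
    proof -
      have "Y = (\<Sum>i\<in>int ` {0..<P}. b i * of_int i ^ m)"
        unfolding Y_def by (subst sum.reindex) (auto simp: lessThan_atLeast0)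
      also have "int ` {0..<P} = insert 0 {1..p-1}" using nn(2) p0 by (auto simp: image_int_atLeastLessThan)
      also have "(\<Sum>i\<in>insert 0 {1..p-1}. b i * of_int i ^ m) = (\<Sum>i=1..p-1. b i * of_int i ^ m)"
        using nn(4) by simp
      finally show ?thesis by simp
    qed
    ultimately show ?thesis by simp
  qed
  have step2: "of_nat n * Y = of_int d ^ m * (\<Sum>k<P. b (int k) * (h (int k + int D) - h (int k)))"
  proof -
    have eachk: "of_nat n * (b (int k) * of_int (int k) ^ m) = of_int d ^ m * (b (int k) * (h (int k + int D) - h (int k)))" for k
    proof -
      have dnz: "(of_int d :: rat) \<noteq> 0" using d1 by simp
      have "h (int k + int D) = bG n (of_int (int k) / of_int d + 1)"
        unfolding h_def using nn(3) dnz by (simp add: field_simps)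
      then have "h (int k + int D) - h (int k) = of_nat n * (of_int (int k) / of_int d) ^ m"
        using bG_diff[of n "of_int (int k) / of_int d"] nn(5) unfolding h_def by simp
      then show ?thesis using dnz by (simp add: power_divide field_simps)
    qed
    show ?thesis unfolding Y_def sum_distrib_left by (rule sum.cong[OF refl]) (rule eachk)
  qed
  have step3: "(\<Sum>k<P. b (int k) * (h (int k + int D) - h (int k))) =
      (\<Sum>t<D. b (int t + int P) * h (int t + int P)) - (\<Sum>t<D. b (int t) * h (int t))"
    by (rule telescope) (simp add: b_def nn(3) bper)
  have step4: "pcong p (\<Sum>t<D. b (int t + int P) * h (int t + int P)) (\<Sum>t<D. b (int t + int P) * h (int t))"
  proof (rule pcong_sum[OF pp])
    fix t assume "t \<in> {..<D}"
    have e: "h (int t + int P) = bG n (of_int (int t) / of_int d + of_int p * (of_int 1 / of_int d))"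
      unfolding h_def using nn(2) by (simp add: add_divide_distrib)
    have hc: "h (int t) = bG n (of_int (int t) / of_int d)" by (simp only: h_def)
    have "pcong p (h (int t + int P)) (h (int t))"
      unfolding e hc by (rule pcong_bG[OF pp nn(6) pint_frac[OF pp assms(4)] pint_frac[OF pp assms(4)]])
    then show "pcong p (b (int t + int P) * h (int t + int P)) (b (int t + int P) * h (int t))"
      by (rule pcong_mult[OF pp pcong_eq[OF pp pint_b refl]])
  qed
  have step5: "(\<Sum>t<D. b (int t + int P) * h (int t)) - (\<Sum>t<D. b (int t) * h (int t)) = c p * W"
  proof -
    have "(\<Sum>t<D. b (int t + int P) * h (int t)) - (\<Sum>t<D. b (int t) * h (int t)) =
          (\<Sum>t<D. (b (int t + int P) - b (int t)) * h (int t))" by (simp add: sum_subtractf algebra_simps)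
    also have "\<dots> = (\<Sum>t<D. c p * (c (int t) * h (int t)))"
    proof (rule sum.cong[OF refl])
      fix t assume "t \<in> {..<D}"
      have "\<beta> (int t + p) = \<beta> (int t) + kronecker d p * kronecker d (int t)" by (rule bstep) simp
      then have "b (int t + int P) - b (int t) = c p * c (int t)" using nn(2) unfolding b_def c_def by simp
      then show "(b (int t + int P) - b (int t)) * h (int t) = c p * (c (int t) * h (int t))" by simp
    qed
    finally show ?thesis unfolding W_def by (simp add: sum_distrib_left)
  qed
  have c_nY: "pcong p (of_nat n * Y) (of_int d ^ m * (c p * W))"
  proof -
    have "pcong p ((\<Sum>t<D. b (int t + int P) * h (int t + int P)) - (\<Sum>t<D. b (int t) * h (int t)))
                  ((\<Sum>t<D. b (int t + int P) * h (int t)) - (\<Sum>t<D. b (int t) * h (int t)))"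
      using pint_b pint_h
      by (intro pcong_diff[OF pp step4] pcong_eq[OF pp] pint_sum[OF pp] pint_mult[OF pp]) auto
    then have "pcong p (of_int d ^ m * ((\<Sum>t<D. b (int t + int P) * h (int t + int P)) - (\<Sum>t<D. b (int t) * h (int t))))
                  (of_int d ^ m * (c p * W))"
      unfolding step5 using pint_power[OF pp pint_int[OF pp, of d]]
      by (intro pcong_mult[OF pp pcong_eq[OF pp]]) auto
    then show ?thesis unfolding step2 step3 .
  qed
  have c_Y: "pcong p Y (- (of_nat n * Y))"
  proof -
    have "(of_int (int n) :: rat) = of_int (p - 1)" using nn(1) by simp
    then have nr: "(of_nat n :: rat) = of_int p - 1" by simp
    have "Y - (- (of_nat n * Y)) = of_int p * Y" unfolding nr by (simp add: algebra_simps)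
    moreover have "pint p (- (of_nat n * Y))"
      using pint_Y pint_int[OF pp, of "int n"] by (intro pint_uminus[OF pp] pint_mult[OF pp]) auto
    ultimately show ?thesis unfolding pcong_def using pint_Y by blast
  qed
  have c_d: "pcong p (of_int d ^ m) (1 / of_int d)"
  proof -
    have "[d ^ nat (p - 1) = 1] (mod p)" using fermat_int[OF pp assms(4)] .
    then have "p dvd d ^ n - 1" unfolding n_def by (simp add: cong_iff_dvd_diff)
    then obtain k where k: "d ^ n - 1 = p * k" by (auto simp: dvd_def)
    have dnz: "(of_int d :: rat) \<noteq> 0" using d1 by simp
    have "of_int d ^ m - 1 / of_int d = (of_int (d ^ n - 1) / of_int d :: rat)"
      using dnz nn(5) by (simp add: field_simps)
    also have "\<dots> = of_int p * (of_int k / of_int d)" using k by simp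
    finally have e: "of_int d ^ m - 1 / of_int d = (of_int p * (of_int k / of_int d) :: rat)" .
    show ?thesis unfolding pcong_def using e pint_frac[OF pp assms(4), of 1] pint_frac[OF pp assms(4), of k]
      pint_power[OF pp pint_int[OF pp, of d]] by auto
  qed
  have c_fin: "pcong p Y (- ((1 / of_int d) * (c p * W)))"
  proof -
    have "pcong p (- (of_nat n * Y)) (- (of_int d ^ m * (c p * W)))" by (rule pcong_uminus[OF pp c_nY])
    moreover have "pcong p (- (of_int d ^ m * (c p * W))) (- ((1 / of_int d) * (c p * W)))"
      using pint_c pint_W
      by (intro pcong_uminus[OF pp] pcong_mult[OF pp c_d] pcong_eq[OF pp] pint_mult[OF pp]) auto
    ultimately show ?thesis using c_Y pcong_trans[OF pp] by blast
  qed
  have W_eq: "W = (\<Sum>c=1..d-1. of_int (kronecker d c) *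
                  (bernpoly (nat (p - 1)) (of_int c / of_int d) - bernoulli (nat (p - 1))))"
  proof -
    have "W = (\<Sum>i\<in>int ` {0..<D}. c i * h i)"
      unfolding W_def by (subst sum.reindex) (auto simp: lessThan_atLeast0)
    also have "int ` {0..<D} = insert 0 {1..d-1}" using nn(3) d1 by (auto simp: image_int_atLeastLessThan)
    also have "(\<Sum>i\<in>insert 0 {1..d-1}. c i * h i) = (\<Sum>i=1..d-1. c i * h i)"
      using K0 by (simp add: c_def)
    also have "\<dots> = (\<Sum>c=1..d-1. of_int (kronecker d c) *
                  (bernpoly (nat (p - 1)) (of_int c / of_int d) - bernoulli (nat (p - 1))))"
      unfolding c_def h_def n_def by (simp add: bernpoly_bG)
    finally show ?thesis .
  qed
  have X: "pcong p (\<Sum>i=1..p-1. of_int (\<beta> i) / of_int i) (- ((1 / of_int d) * (c p * W)))"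
    using pcong_trans[OF pp step1 c_fin] .
  have eqn: "- ((1 / of_int d) * (c p * W)) = - (1 / of_int d) * of_int (kronecker d p) *
              (\<Sum>c=1..d-1. of_int (kronecker d c) *
                  (bernpoly (nat (p - 1)) (of_int c / of_int d) - bernoulli (nat (p - 1))))"
    unfolding W_eq c_def by simp
  have "pcong p (\<Sum>i=1..p-1. of_int (\<beta> i) / of_int i) (- (1 / of_int d) * of_int (kronecker d p) *
              (\<Sum>c=1..d-1. of_int (kronecker d c) *
                  (bernpoly (nat (p - 1)) (of_int c / of_int d) - bernoulli (nat (p - 1)))))"
    using X unfolding eqn .
  then show ?thesis by (rule pcong_rat_cong[OF pp])
qed


end
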